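(* Let $I=(i_1,\dots,i_k)$ be positive integers with sum $n$, and let $U,V\in S_n^I$ with $U\preceq V$ and $U\ne V$. Let $j_0$ be the least index with $U(j_0)\neq V(j_0)$. Then $U(j_0)<V(j_0)$. Let $l\ge j_0$ be maximal such that $V(j_0)=V(j_0+1)=\dots=V(l)$, and let $m$ be the least integer with $l\le m\le n$ satisfying $U(j_0)\le V(m)<V(l)$. Let $V'=V\circ(l,m)$, i.e. the string $(V(1),\dots,V(n))$ with the entries in positions $l$ and $m$ swapped. Then $U\preceq V'\preceq V$.
   Context: $S_n^I$ is the set of surjective maps $\tau\colon\{1,\dots,n\}\to\{1,\dots,k\}$ with $|\tau^{-1}(j)|=i_j$ for all $j$, written as strings $(\tau(1),\dots,\tau(n))$. Put $r_\tau[p,q]=\#\{j\le p:\ \tau(j)\ge q\}$; the Bruhat order on $S_n^I$ is $\tau\preceq\upsilon$ iff $r_\tau[p,q]\le r_\upsilon[p,q]$ for all $1\le p\le n$, $1\le q\le k$. *)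

theory Defs
  imports Main "HOL-Combinatorics.Transposition"
begin

(* The composition I = (i_1,...,i_k) is a list; i_j = I ! (j-1), k = length I, n = sum_list I.
   Maps tau : {1..n} -> {1..k} are represented as functions nat => nat that are 0 outside {1..n}
   (canonical representatives, so that equality of functions is equality of strings). *)

definition SnI :: "nat list \<Rightarrow> (nat \<Rightarrow> nat) set" where
  "SnI I = {\<tau>. (\<forall>p. p \<notin> {1..sum_list I} \<longrightarrow> \<tau> p = 0)
              \<and> \<tau> ` {1..sum_list I} = {1..length I}
              \<and> (\<forall>j\<in>{1..length I}. card {p\<in>{1..sum_list I}. \<tau> p = j} = I ! (j - 1))}"

definition rk :: "(nat \<Rightarrow> nat) \<Rightarrow> nat \<Rightarrow> nat \<Rightarrow> nat" where
  "rk \<tau> p q = card {j\<in>{1..p}. \<tau> j \<ge> q}"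

definition bruhat_le :: "nat list \<Rightarrow> (nat \<Rightarrow> nat) \<Rightarrow> (nat \<Rightarrow> nat) \<Rightarrow> bool" where
  "bruhat_le I \<tau> \<upsilon> \<longleftrightarrow>
     (\<forall>p\<in>{1..sum_list I}. \<forall>q\<in>{1..length I}. rk \<tau> p q \<le> rk \<upsilon> p q)"

end

theory Submission
  imports Defs
begin

lemma card_two_split:
  assumes "finite A" "x \<noteq> y"
  shows "card A = card (A - {x,y}) + (if x \<in> A then 1 else 0) + (if y \<in> A then 1 else 0)"
proof -
  have "card (A - {x,y}) = card A - card (A \<inter> {x,y})"
    using assms by (simp add: card_Diff_subset_Int)
  moreover have "card (A \<inter> {x,y}) = (if x \<in> A then 1 else 0) + (if y \<in> A then 1 else 0)"
    using assms by (cases "x \<in> A"; cases "y \<in> A") (auto simp: Int_insert_right)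
  moreover have "card (A \<inter> {x,y}) \<le> card A" using assms by (simp add: card_mono)
  ultimately show ?thesis by linarith
qed

lemma rk_diff:
  assumes "a \<le> q"
  shows "rk \<tau> p q \<le> rk \<tau> p a"
    and "rk \<tau> p a - rk \<tau> p q = card {j\<in>{1..p}. a \<le> \<tau> j \<and> \<tau> j < q}"
proof -
  have sub: "{j\<in>{1..p}. q \<le> \<tau> j} \<subseteq> {j\<in>{1..p}. a \<le> \<tau> j}" using assms by auto
  show "rk \<tau> p q \<le> rk \<tau> p a" unfolding rk_def by (rule card_mono[OF _ sub]) simp
  have "{j\<in>{1..p}. a \<le> \<tau> j \<and> \<tau> j < q} = {j\<in>{1..p}. a \<le> \<tau> j} - {j\<in>{1..p}. q \<le> \<tau> j}"
    by auto
  then show "rk \<tau> p a - rk \<tau> p q = card {j\<in>{1..p}. a \<le> \<tau> j \<and> \<tau> j < q}"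
    unfolding rk_def using card_Diff_subset[OF _ sub] by simp
qed

lemma rk_total:
  assumes "\<tau> \<in> SnI I" "1 \<le> q"
  shows "rk \<tau> (sum_list I) q = (\<Sum>v\<in>{q..length I}. I!(v-1))"
proof -
  let ?n = "sum_list I" and ?k = "length I"
  have img: "\<tau> ` {1..?n} = {1..?k}" and cnt: "\<forall>j\<in>{1..?k}. card {p\<in>{1..?n}. \<tau> p = j} = I ! (j - 1)"
    using assms(1) unfolding SnI_def by auto
  have "{j\<in>{1..?n}. q \<le> \<tau> j} = (\<Union>v\<in>{q..?k}. {p\<in>{1..?n}. \<tau> p = v})"
  proof
    show "{j\<in>{1..?n}. q \<le> \<tau> j} \<subseteq> (\<Union>v\<in>{q..?k}. {p\<in>{1..?n}. \<tau> p = v})"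
    proof
      fix j assume j: "j \<in> {j\<in>{1..?n}. q \<le> \<tau> j}"
      then have "\<tau> j \<in> {1..?k}" using img by blast
      then show "j \<in> (\<Union>v\<in>{q..?k}. {p\<in>{1..?n}. \<tau> p = v})" using j by auto
    qed
  qed auto
  then have "rk \<tau> ?n q = card (\<Union>v\<in>{q..?k}. {p\<in>{1..?n}. \<tau> p = v})" unfolding rk_def by simp
  also have "\<dots> = (\<Sum>v\<in>{q..?k}. card {p\<in>{1..?n}. \<tau> p = v})"
    by (rule card_UN_disjoint) auto
  also have "\<dots> = (\<Sum>v\<in>{q..?k}. I!(v-1))"
    using cnt assms(2) by (intro sum.cong) auto
  finally show ?thesis .
qed

theorem lemma2p11:
  fixes I :: "nat list" and U V :: "nat \<Rightarrow> nat"
  assumes pos: "\<forall>i\<in>set I. i > 0"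
    and U: "U \<in> SnI I" and V: "V \<in> SnI I"
    and le: "bruhat_le I U V" and ne: "U \<noteq> V"
  defines "n \<equiv> sum_list I"
  defines "j0 \<equiv> LEAST j. 1 \<le> j \<and> j \<le> n \<and> U j \<noteq> V j"
  defines "l \<equiv> GREATEST l. j0 \<le> l \<and> l \<le> n \<and> (\<forall>t\<in>{j0..l}. V t = V j0)"
  defines "m \<equiv> LEAST m. l \<le> m \<and> m \<le> n \<and> U j0 \<le> V m \<and> V m < V l"
  shows "U j0 < V j0
         \<and> (\<exists>m'. l \<le> m' \<and> m' \<le> n \<and> U j0 \<le> V m' \<and> V m' < V l)
         \<and> bruhat_le I U (V \<circ> Transposition.transpose l m)
         \<and> bruhat_le I (V \<circ> Transposition.transpose l m) V"
proof -
  let ?k = "length I"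
  have U0: "\<And>p. p \<notin> {1..n} \<Longrightarrow> U p = 0" and Uimg: "U ` {1..n} = {1..?k}"
    using U unfolding SnI_def n_def by auto
  have V0: "\<And>p. p \<notin> {1..n} \<Longrightarrow> V p = 0" and Vimg: "V ` {1..n} = {1..?k}"
    using V unfolding SnI_def n_def by auto
  have bru: "\<And>p q. p \<in> {1..n} \<Longrightarrow> q \<in> {1..?k} \<Longrightarrow> rk U p q \<le> rk V p q"
    using le unfolding bruhat_le_def n_def by auto
  have ex: "\<exists>j. 1 \<le> j \<and> j \<le> n \<and> U j \<noteq> V j"
  proof -
    obtain x where "U x \<noteq> V x" using ne by auto
    then show ?thesis using U0 V0 by (cases "x \<in> {1..n}") auto
  qed
  have j0P: "1 \<le> j0 \<and> j0 \<le> n \<and> U j0 \<noteq> V j0"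
    unfolding j0_def by (rule LeastI_ex[OF ex])
  have before: "\<And>j. 1 \<le> j \<Longrightarrow> j < j0 \<Longrightarrow> U j = V j"
  proof -
    fix j assume "1 \<le> j" "j < j0"
    then have "\<not> (1 \<le> j \<and> j \<le> n \<and> U j \<noteq> V j)" using not_less_Least j0_def by blast
    then show "U j = V j" using \<open>1 \<le> j\<close> \<open>j < j0\<close> j0P by auto
  qed
  define a where "a = U j0"
  define b where "b = V j0"
  have a_rng: "1 \<le> a \<and> a \<le> ?k" using Uimg j0P unfolding a_def by force
  have b_rng: "1 \<le> b \<and> b \<le> ?k" using Vimg j0P unfolding b_def by force
  have ab: "a < b"
  proof (rule ccontr)
    assume "\<not> a < b"
    with j0P have ba: "b < a" unfolding a_def b_def by auto
    define D where "D = {j\<in>{1..j0}. j < j0 \<and> a \<le> V j}"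
    have s1: "{j\<in>{1..j0}. a \<le> V j} \<subseteq> D" using ba unfolding D_def b_def
      by (auto simp: le_less)
    have s2: "insert j0 D \<subseteq> {j\<in>{1..j0}. a \<le> U j}" using before j0P unfolding D_def a_def by auto
    have "card {j\<in>{1..j0}. a \<le> V j} \<le> card D" by (rule card_mono[OF _ s1]) (simp add: D_def)
    also have "\<dots> < card (insert j0 D)" by (simp add: D_def)
    also have "\<dots> \<le> card {j\<in>{1..j0}. a \<le> U j}" by (rule card_mono[OF _ s2]) simp
    finally have "rk V j0 a < rk U j0 a" unfolding rk_def .
    moreover have "rk U j0 a \<le> rk V j0 a" using bru j0P a_rng by auto
    ultimately show False by simp
  qed
  have lP: "j0 \<le> l \<and> l \<le> n \<and> (\<forall>t\<in>{j0..l}. V t = b)"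
  proof -
    let ?P = "\<lambda>l. j0 \<le> l \<and> l \<le> n \<and> (\<forall>t\<in>{j0..l}. V t = V j0)"
    have "?P j0" using j0P by simp
    moreover have "\<And>y. ?P y \<Longrightarrow> y \<le> n" by blast
    ultimately have "?P (Greatest ?P)" by (rule GreatestI_nat)
    then show ?thesis unfolding l_def b_def .
  qed
  have Vl: "V l = b" using lP by auto
  have j0b: "\<And>j. j0 \<le> j \<Longrightarrow> j \<le> l \<Longrightarrow> V j = b" using lP by auto
  have ex2: "\<exists>m'. l \<le> m' \<and> m' \<le> n \<and> a \<le> V m' \<and> V m' < b"
  proof (rule ccontr)
    assume na: "\<not> ?thesis"
    have none: "\<And>j. j0 \<le> j \<Longrightarrow> j \<le> n \<Longrightarrow> \<not> (a \<le> V j \<and> V j < b)"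
    proof -
      fix j assume "j0 \<le> j" "j \<le> n"
      show "\<not> (a \<le> V j \<and> V j < b)"
      proof (cases "j \<le> l")
        case True then show ?thesis using j0b \<open>j0 \<le> j\<close> by auto
      next
        case False then show ?thesis using na \<open>j \<le> n\<close> by auto
      qed
    qed
    define D where "D = {j\<in>{1..n}. j < j0 \<and> a \<le> V j \<and> V j < b}"
    have s1: "{j\<in>{1..n}. a \<le> V j \<and> V j < b} \<subseteq> D" unfolding D_def
    proof (rule subsetI)
      fix x assume x: "x \<in> {j\<in>{1..n}. a \<le> V j \<and> V j < b}"
      have "x < j0"
      proof (rule ccontr)
        assume "\<not> x < j0"
        then have "j0 \<le> x" by simp
        with x none show False by auto
      qed
      with x show "x \<in> {j\<in>{1..n}. j < j0 \<and> a \<le> V j \<and> V j < b}" by auto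
    qed
    have s2: "insert j0 D \<subseteq> {j\<in>{1..n}. a \<le> U j \<and> U j < b}"
      using before j0P ab unfolding D_def a_def by auto
    have "card {j\<in>{1..n}. a \<le> V j \<and> V j < b} \<le> card D" by (rule card_mono[OF _ s1]) (simp add: D_def)
    also have "\<dots> < card (insert j0 D)" by (simp add: D_def)
    also have "\<dots> \<le> card {j\<in>{1..n}. a \<le> U j \<and> U j < b}" by (rule card_mono[OF _ s2]) simp
    finally have lt: "rk V n a - rk V n b < rk U n a - rk U n b"
      using rk_diff(2)[of a b] ab by simp
    have "rk V n a = rk U n a" "rk V n b = rk U n b"
      using rk_total[OF U] rk_total[OF V] a_rng b_rng unfolding n_def by auto
    with lt show False by simp
  qed
  have mP: "l \<le> m \<and> m \<le> n \<and> a \<le> V m \<and> V m < b"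
    unfolding m_def a_def[symmetric] Vl by (rule LeastI_ex[OF ex2])
  have mmin: "\<And>p. l \<le> p \<Longrightarrow> p < m \<Longrightarrow> \<not> (a \<le> V p \<and> V p < b)"
  proof -
    fix p assume "l \<le> p" "p < m"
    then have "\<not> (l \<le> p \<and> p \<le> n \<and> a \<le> V p \<and> V p < b)"
      using not_less_Least[of p "\<lambda>m. l \<le> m \<and> m \<le> n \<and> a \<le> V m \<and> V m < b"]
      unfolding m_def a_def[symmetric] Vl by blast
    then show "\<not> (a \<le> V p \<and> V p < b)" using \<open>l \<le> p\<close> \<open>p < m\<close> mP by auto
  qed
  have lm: "l < m" using mP Vl by (cases "l = m") auto
  have mid: "\<And>p. j0 \<le> p \<Longrightarrow> p < m \<Longrightarrow> \<not> (a \<le> V p \<and> V p < b)"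
  proof -
    fix p assume "j0 \<le> p" "p < m"
    show "\<not> (a \<le> V p \<and> V p < b)"
    proof (cases "p \<le> l")
      case True then show ?thesis using j0b \<open>j0 \<le> p\<close> by auto
    next
      case False then show ?thesis using mmin \<open>p < m\<close> by auto
    qed
  qed
  have key: "\<And>p q. l \<le> p \<Longrightarrow> p < m \<Longrightarrow> a < q \<Longrightarrow> q \<le> b \<Longrightarrow> rk U p q < rk V p q"
  proof -
    fix p q assume p1: "l \<le> p" "p < m" and q1: "a < q" "q \<le> b"
    define D where "D = {j\<in>{1..p}. j < j0 \<and> a \<le> V j \<and> V j < q}"
    have s1: "{j\<in>{1..p}. a \<le> V j \<and> V j < q} \<subseteq> D"
    proof
      fix j assume j: "j \<in> {j\<in>{1..p}. a \<le> V j \<and> V j < q}"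
      have "j < j0"
      proof (rule ccontr)
        assume "\<not> j < j0"
        then have "\<not> (a \<le> V j \<and> V j < b)" using mid j p1 by auto
        then show False using j q1 by auto
      qed
      then show "j \<in> D" using j unfolding D_def by auto
    qed
    have s2: "insert j0 D \<subseteq> {j\<in>{1..p}. a \<le> U j \<and> U j < q}"
      using before j0P q1 p1 lP unfolding D_def a_def by auto
    have "card {j\<in>{1..p}. a \<le> V j \<and> V j < q} \<le> card D" by (rule card_mono[OF _ s1]) (simp add: D_def)
    also have "\<dots> < card (insert j0 D)" by (simp add: D_def)
    also have "\<dots> \<le> card {j\<in>{1..p}. a \<le> U j \<and> U j < q}" by (rule card_mono[OF _ s2]) simp
    finally have lt: "rk V p a - rk V p q < rk U p a - rk U p q"
      using rk_diff(2)[of a q] q1 by simp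
    have "rk U p a \<le> rk V p a" using bru a_rng p1 lP j0P mP by auto
    moreover have "rk V p q \<le> rk V p a" "rk U p q \<le> rk U p a" using rk_diff(1) q1 by auto
    ultimately show "rk U p q < rk V p q" using lt by linarith
  qed
  define W where "W = V \<circ> Transposition.transpose l m"
  have l1: "1 \<le> l" using lP j0P by auto
  have Wl: "W l = V m" and Wm: "W m = b" and Wo: "\<And>j. j \<noteq> l \<Longrightarrow> j \<noteq> m \<Longrightarrow> W j = V j"
    using Vl unfolding W_def by (auto simp: transpose_def)
  have eqR: "\<And>p q. {j\<in>{1..p}. q \<le> W j} - {l,m} = {j\<in>{1..p}. q \<le> V j} - {l,m}"
    using Wo by auto
  have rkW: "\<And>p q. rk W p q = card ({j\<in>{1..p}. q \<le> V j} - {l,m})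
      + (if l \<le> p \<and> q \<le> V m then 1 else 0) + (if m \<le> p \<and> q \<le> b then 1 else 0)"
    unfolding rk_def
    apply (subst card_two_split[where x=l and y=m])
    using lm l1 Wl Wm eqR by auto
  have rkV: "\<And>p q. rk V p q = card ({j\<in>{1..p}. q \<le> V j} - {l,m})
      + (if l \<le> p \<and> q \<le> b then 1 else 0) + (if m \<le> p \<and> q \<le> V m then 1 else 0)"
    unfolding rk_def
    apply (subst card_two_split[where x=l and y=m])
    using lm l1 Vl by auto
  have c1: "bruhat_le I W V"
    unfolding bruhat_le_def
  proof (intro ballI)
    fix p q
    show "rk W p q \<le> rk V p q" unfolding rkW rkV using mP lm by auto
  qed
  have c2: "bruhat_le I U W"
    unfolding bruhat_le_def
  proof (intro ballI)
    fix p q assume p: "p \<in> {1..sum_list I}" and q: "q \<in> {1..?k}"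
    have b0: "rk U p q \<le> rk V p q" using bru p q unfolding n_def by auto
    show "rk U p q \<le> rk W p q"
    proof (cases "l \<le> p \<and> p < m \<and> V m < q \<and> q \<le> b")
      case True
      then have "rk U p q < rk V p q" using key mP by auto
      then show ?thesis unfolding rkW rkV using True by auto
    next
      case False
      then show ?thesis using b0 unfolding rkW rkV using mP lm by auto
    qed
  qed
  show ?thesis using ab ex2 c1 c2 Vl unfolding W_def a_def b_def by auto
qed

end
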